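(* Let $M:D\to E$ be the continuous map where $D=\{x,y,z,c\}$ has open sets $\emptyset,\{x,y,z\},D$, $E=\{u,v\}$ is the two-point antidiscrete space, and $M(x)=M(y)=u$, $M(z)=M(c)=v$. Let $k:\{\bullet\}\to S$ be the map sending the point to the closed point $c$ of the Sierpinski space $S=\{o,c\}$ (open sets $\emptyset,\{o\},S$). Then, in $\mathrm{Top}$, $\{M\}^l=\{k\}^{lr}$, and this is the class of closed subspace embeddings, i.e. of closed injective continuous maps.
   Context: For continuous maps $f:A\to B$, $g:C\to D'$, $f\pitchfork g$ means: for all continuous $t:A\to C$, $b:B\to D'$ with $g\circ t=b\circ f$ there is continuous $d:B\to C$ with $d\circ f=t$, $g\circ d=b$. For a class $P$, $P^l=\{f: f\pitchfork g\ \forall g\in P\}$, $P^r=\{g: f\pitchfork g\ \forall f\in P\}$, and $P^{lr}=(P^l)^r$. *)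

theory Defs
  imports "HOL-Analysis.Analysis"
begin

definition lifts ::
  "'a topology \<Rightarrow> 'b topology \<Rightarrow> ('a \<Rightarrow> 'b) \<Rightarrow>
   'c topology \<Rightarrow> 'd topology \<Rightarrow> ('c \<Rightarrow> 'd) \<Rightarrow> bool" where
  "lifts A B f C D' g \<longleftrightarrow>
     (\<forall>t b. continuous_map A C t \<and> continuous_map B D' b \<and>
            (\<forall>a\<in>topspace A. g (t a) = b (f a)) \<longrightarrow>
        (\<exists>d. continuous_map B C d \<and>
             (\<forall>a\<in>topspace A. d (f a) = t a) \<and>
             (\<forall>y\<in>topspace B. g (d y) = b y)))"

datatype ptD = Dx | Dy | Dz | Dc
datatype ptE = Eu | Ev
datatype ptS = So | Sc

definition D_top :: "ptD topology" where
  "D_top = topology (\<lambda>U. U \<in> {{}, {Dx, Dy, Dz}, UNIV})"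

definition E_top :: "ptE topology" where
  "E_top = topology (\<lambda>U. U \<in> {{}, UNIV})"

definition S_top :: "ptS topology" where
  "S_top = topology (\<lambda>U. U \<in> {{}, {So}, UNIV})"

definition pt_top :: "unit topology" where
  "pt_top = discrete_topology UNIV"

definition M_map :: "ptD \<Rightarrow> ptE" where
  "M_map p = (case p of Dx \<Rightarrow> Eu | Dy \<Rightarrow> Eu | Dz \<Rightarrow> Ev | Dc \<Rightarrow> Ev)"

definition k_map :: "unit \<Rightarrow> ptS" where
  "k_map _ = Sc"

definition closed_embedding_map :: "'a topology \<Rightarrow> 'b topology \<Rightarrow> ('a \<Rightarrow> 'b) \<Rightarrow> bool" where
  "closed_embedding_map X Y g \<longleftrightarrow> embedding_map X Y g \<and> closedin Y (g ` topspace X)"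


lemma istopology_chain3:
  assumes AB: "A \<subseteq> B"
  shows "istopology (\<lambda>U. U \<in> {{}, A, B})"
  unfolding istopology_def
proof (intro conjI allI impI ballI)
  fix S T assume "S \<in> {{}, A, B}" "T \<in> {{}, A, B}"
  then show "S \<inter> T \<in> {{}, A, B}"
    using AB by (elim insertE emptyE) (simp_all add: Int_absorb1 Int_absorb2)
next
  fix K assume K: "\<forall>S\<in>K. S \<in> {{}, A, B}"
  show "\<Union>K \<in> {{}, A, B}"
  proof (cases "B \<in> K")
    case True
    then have "\<Union>K = B" using K AB by blast
    then show ?thesis by simp
  next
    case nB: False
    show ?thesis
    proof (cases "A \<in> K")
      case True
      then have "\<Union>K = A" using K nB AB by blast
      then show ?thesis by simp
    next
      case False
      then have "\<Union>K = {}" using K nB by blast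
      then show ?thesis by simp
    qed
  qed
qed

lemma openin_D_top: "openin D_top U \<longleftrightarrow> U \<in> {{}, {Dx, Dy, Dz}, UNIV}"
proof -
  have "istopology (\<lambda>U. U \<in> {{}, {Dx, Dy, Dz}, (UNIV::ptD set)})" by (rule istopology_chain3) simp
  then show ?thesis unfolding D_top_def by (subst topology_inverse') simp_all
qed

lemma openin_E_top: "openin E_top U \<longleftrightarrow> U \<in> {{}, UNIV}"
proof -
  have "istopology (\<lambda>U. U \<in> {{}, {}, (UNIV::ptE set)})" by (rule istopology_chain3) simp
  then show ?thesis unfolding E_top_def by (subst topology_inverse') simp_all
qed

lemma openin_S_top: "openin S_top U \<longleftrightarrow> U \<in> {{}, {So}, UNIV}"
proof -
  have "istopology (\<lambda>U. U \<in> {{}, {So}, (UNIV::ptS set)})" by (rule istopology_chain3) simp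
  then show ?thesis unfolding S_top_def by (subst topology_inverse') simp_all
qed

end

theory Submission
  imports Defs
begin

lemma topspace_D: "topspace D_top = UNIV"
  by (metis openin_D_top openin_subset insertCI top.extremum_uniqueI)
lemma topspace_E: "topspace E_top = UNIV"
  by (metis openin_E_top openin_subset insertCI top.extremum_uniqueI)
lemma topspace_S: "topspace S_top = UNIV"
  by (metis openin_S_top openin_subset insertCI top.extremum_uniqueI)
lemma topspace_pt: "topspace pt_top = UNIV"
  by (simp add: pt_top_def)

lemma M_Eu: "M_map p = Eu \<longleftrightarrow> p = Dx \<or> p = Dy"
  by (cases p) (auto simp: M_map_def)
lemma M_Ev: "M_map p = Ev \<longleftrightarrow> p = Dz \<or> p = Dc"
  by (cases p) (auto simp: M_map_def)

lemma cont_D: "continuous_map Y D_top d \<longleftrightarrow> openin Y {y\<in>topspace Y. d y \<noteq> Dc}"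
proof
  have e: "{Dx, Dy, Dz} = {p. p \<noteq> Dc}" by (auto intro: ptD.exhaust)
  assume "continuous_map Y D_top d"
  then have "openin Y {x \<in> topspace Y. d x \<in> {Dx, Dy, Dz}}"
    unfolding continuous_map_def openin_D_top by blast
  then show "openin Y {y \<in> topspace Y. d y \<noteq> Dc}" by (simp add: e)
next
  have e: "{Dx, Dy, Dz} = {p. p \<noteq> Dc}" by (auto intro: ptD.exhaust)
  assume o: "openin Y {y \<in> topspace Y. d y \<noteq> Dc}"
  have "openin Y {x \<in> topspace Y. d x \<in> U}" if "U \<in> {{}, {Dx, Dy, Dz}, UNIV}" for U
    using that o by (auto simp: e)
  then show "continuous_map Y D_top d"
    unfolding continuous_map_def openin_D_top topspace_D by auto
qed

lemma cont_E: "continuous_map Y E_top b"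
  unfolding continuous_map_def topspace_E openin_E_top by auto

lemma cont_S: "continuous_map Y S_top b \<longleftrightarrow> openin Y {y\<in>topspace Y. b y = So}"
proof
  assume "continuous_map Y S_top b"
  then have "openin Y {x \<in> topspace Y. b x \<in> {So}}"
    unfolding continuous_map_def openin_S_top by blast
  then show "openin Y {y \<in> topspace Y. b y = So}" by simp
next
  assume o: "openin Y {y \<in> topspace Y. b y = So}"
  have "openin Y {x \<in> topspace Y. b x \<in> U}" if "U \<in> {{}, {So}, UNIV}" for U
    using that o by auto
  then show "continuous_map Y S_top b"
    unfolding continuous_map_def openin_S_top topspace_S by auto
qed

lemma cont_pt: "continuous_map Y pt_top t"
  unfolding continuous_map_def topspace_pt pt_top_def
proof safe
  fix U :: "unit set"
  have "U = {} \<or> U = UNIV" by auto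
  then show "openin Y {x \<in> topspace Y. t x \<in> U}" by auto
qed auto

lemma lifts_k:
  assumes fA: "f ` topspace A \<subseteq> topspace B"
  shows "lifts A B f pt_top S_top k_map \<longleftrightarrow>
    (\<forall>F. closedin B F \<and> f ` topspace A \<subseteq> F \<longrightarrow> F = topspace B)"
proof
  assume L: "lifts A B f pt_top S_top k_map"
  show "\<forall>F. closedin B F \<and> f ` topspace A \<subseteq> F \<longrightarrow> F = topspace B"
  proof (intro allI impI)
    fix F assume F0: "closedin B F \<and> f ` topspace A \<subseteq> F"
    then have F: "closedin B F" "f ` topspace A \<subseteq> F" by auto
    define b where "b y = (if y \<in> F then Sc else So)" for y
    have "{y\<in>topspace B. b y = So} = topspace B - F" by (auto simp: b_def)
    then have cb: "continuous_map B S_top b" using F(1) by (simp add: cont_S closedin_def)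
    have "\<forall>a\<in>topspace A. k_map ((\<lambda>_. ()) a) = b (f a)" using F(2) by (auto simp: b_def k_map_def)
    then obtain d where "\<forall>y\<in>topspace B. k_map (d y) = b y"
      using L cb cont_pt[of A "\<lambda>_. ()"] unfolding lifts_def by blast
    then have "topspace B \<subseteq> F"
    proof (intro subsetI)
      fix y assume H: "\<forall>y\<in>topspace B. k_map (d y) = b y" and y: "y \<in> topspace B"
      then have "b y = Sc" by (simp add: k_map_def)
      then show "y \<in> F" unfolding b_def by (cases "y \<in> F") simp_all
    qed
    then show "F = topspace B" using F(1) closedin_subset by blast
  qed
next
  assume D: "\<forall>F. closedin B F \<and> f ` topspace A \<subseteq> F \<longrightarrow> F = topspace B"
  show "lifts A B f pt_top S_top k_map"
    unfolding lifts_def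
  proof (intro allI impI, elim conjE)
    fix t b assume cb: "continuous_map B S_top b" and eq: "\<forall>a\<in>topspace A. k_map (t a) = b (f a)"
    have "openin B {y\<in>topspace B. b y = So}" using cb by (simp add: cont_S)
    then have cl: "closedin B (topspace B - {y\<in>topspace B. b y = So})" by auto
    have "f ` topspace A \<subseteq> topspace B - {y\<in>topspace B. b y = So}"
      using fA eq by (auto simp: k_map_def)
    then have T: "topspace B - {y\<in>topspace B. b y = So} = topspace B" using D cl by blast
    have "\<forall>y\<in>topspace B. k_map (()) = b y"
    proof
      fix y assume "y \<in> topspace B"
      then have "b y \<noteq> So" using T by blast
      then show "k_map (()) = b y" by (cases "b y") (simp_all add: k_map_def)
    qed
    then show "\<exists>d. continuous_map B pt_top d \<and> (\<forall>a\<in>topspace A. d (f a) = t a) \<and>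
               (\<forall>y\<in>topspace B. k_map (d y) = b y)"
      using cont_pt[of B "\<lambda>_. ()"] by (intro exI[of _ "\<lambda>_. ()"]) simp
  qed
qed

lemma ce_iff:
  "closed_embedding_map X Y g \<longleftrightarrow>
        continuous_map X Y g \<and> closed_map X Y g \<and> inj_on g (topspace X)"
proof
  assume "closed_embedding_map X Y g"
  then have e: "embedding_map X Y g" and c: "closedin Y (g ` topspace X)"
    by (auto simp: closed_embedding_map_def)
  have h: "homeomorphic_map X (subtopology Y (g ` topspace X)) g" using e by (simp add: embedding_map_def)
  then have "continuous_map X Y g"
    using homeomorphic_imp_continuous_map continuous_map_in_subtopology by blast
  moreover have "inj_on g (topspace X)" using h homeomorphic_imp_injective_map by blast
  moreover have "closed_map X Y g" using embedding_imp_closed_map e c by blast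
  ultimately show "continuous_map X Y g \<and> closed_map X Y g \<and> inj_on g (topspace X)" by blast
next
  assume "continuous_map X Y g \<and> closed_map X Y g \<and> inj_on g (topspace X)"
  then show "closed_embedding_map X Y g"
    unfolding closed_embedding_map_def
    using injective_closed_imp_embedding_map closed_map_def by blast
qed

lemma part3a:
  assumes cg: "continuous_map X Y g" and cm: "closed_map X Y g" and ij: "inj_on g (topspace X)"
  shows "lifts X Y g D_top E_top M_map"
  unfolding lifts_def
proof (intro allI impI, elim conjE)
  fix t b assume ct: "continuous_map X D_top t" and cb: "continuous_map Y E_top b"
    and eq: "\<forall>a\<in>topspace X. M_map (t a) = b (g a)"
  define d where "d y = (if y \<in> g ` topspace X then t (inv_into (topspace X) g y)
      else if b y = Eu then Dx else Dz)" for y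
  have dg: "d (g a) = t a" if "a \<in> topspace X" for a
    using that ij by (auto simp: d_def)
  have o: "openin X {a\<in>topspace X. t a \<noteq> Dc}" using ct by (simp add: cont_D)
  have "closedin X (topspace X - {a\<in>topspace X. t a \<noteq> Dc})" using o by auto
  moreover have "topspace X - {a\<in>topspace X. t a \<noteq> Dc} = {a\<in>topspace X. t a = Dc}" by auto
  ultimately have "closedin Y (g ` {a\<in>topspace X. t a = Dc})" using cm by (simp add: closed_map_def)
  then have o2: "openin Y (topspace Y - g ` {a\<in>topspace X. t a = Dc})" by auto
  have "{y\<in>topspace Y. d y \<noteq> Dc} = topspace Y - g ` {a\<in>topspace X. t a = Dc}"
  proof (intro set_eqI iffI)
    fix y assume "y \<in> {y\<in>topspace Y. d y \<noteq> Dc}"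
    then show "y \<in> topspace Y - g ` {a\<in>topspace X. t a = Dc}" using dg by auto
  next
    fix y assume y: "y \<in> topspace Y - g ` {a\<in>topspace X. t a = Dc}"
    show "y \<in> {y\<in>topspace Y. d y \<noteq> Dc}"
    proof (cases "y \<in> g ` topspace X")
      case True
      then obtain a where "a \<in> topspace X" "y = g a" by auto
      then show ?thesis using y dg by auto
    next
      case False
      then show ?thesis using y by (auto simp: d_def)
    qed
  qed
  then have cd: "continuous_map Y D_top d" using o2 by (simp add: cont_D)
  have "M_map (d y) = b y" if y: "y \<in> topspace Y" for y
  proof (cases "y \<in> g ` topspace X")
    case True
    then obtain a where "a \<in> topspace X" "y = g a" by auto
    then show ?thesis using eq dg by auto
  next
    case False
    then show ?thesis by (cases "b y") (auto simp: d_def M_map_def)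
  qed
  then show "\<exists>d. continuous_map Y D_top d \<and> (\<forall>a\<in>topspace X. d (g a) = t a) \<and>
             (\<forall>y\<in>topspace Y. M_map (d y) = b y)"
    using cd dg by blast
qed

lemma part3b:
  assumes cg: "continuous_map X Y g" and L: "lifts X Y g D_top E_top M_map"
  shows "closed_map X Y g \<and> inj_on g (topspace X)"
proof -
  have ij: "inj_on g (topspace X)"
  proof (rule inj_onI, rule ccontr)
    fix a1 a2 assume a: "a1 \<in> topspace X" "a2 \<in> topspace X" "g a1 = g a2" "a1 \<noteq> a2"
    define t where "t a = (if a = a1 then Dx else Dy)" for a
    have "{a\<in>topspace X. t a \<noteq> Dc} = topspace X" by (auto simp: t_def)
    then have ct: "continuous_map X D_top t" by (simp add: cont_D)
    have "\<forall>a\<in>topspace X. M_map (t a) = (\<lambda>_. Eu) (g a)" by (auto simp: t_def M_map_def)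
    then obtain d where "\<forall>a\<in>topspace X. d (g a) = t a"
      using L ct cont_E[of Y "\<lambda>_. Eu"] unfolding lifts_def by blast
    then have "t a1 = t a2" using a by metis
    then show False using a by (simp add: t_def)
  qed
  have cm: "closed_map X Y g"
    unfolding closed_map_def
  proof (intro allI impI)
    fix U assume U: "closedin X U"
    then have UX: "U \<subseteq> topspace X" by (simp add: closedin_subset)
    define t where "t a = (if a \<in> U then Dc else Dx)" for a
    define b where "b y = (if y \<in> g ` U then Ev else Eu)" for y
    have "{a\<in>topspace X. t a \<noteq> Dc} = topspace X - U" by (auto simp: t_def)
    then have ct: "continuous_map X D_top t" using U by (simp add: cont_D closedin_def)
    have "\<forall>a\<in>topspace X. M_map (t a) = b (g a)"
    proof
      fix a assume a: "a \<in> topspace X"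
      show "M_map (t a) = b (g a)"
      proof (cases "a \<in> U")
        case True then show ?thesis by (simp add: t_def b_def M_map_def)
      next
        case False
        then have "g a \<notin> g ` U" using a UX ij by (auto dest: inj_onD)
        then show ?thesis using False by (simp add: t_def b_def M_map_def)
      qed
    qed
    then obtain d where cd: "continuous_map Y D_top d" and dg: "\<forall>a\<in>topspace X. d (g a) = t a"
      and Md: "\<forall>y\<in>topspace Y. M_map (d y) = b y"
      using L ct cont_E[of Y b] unfolding lifts_def by blast
    have "{y\<in>topspace Y. d y \<noteq> Dc} = topspace Y - g ` U"
    proof (intro set_eqI iffI)
      fix y assume y: "y \<in> {y\<in>topspace Y. d y \<noteq> Dc}"
      have "y \<notin> g ` U"
      proof
        assume "y \<in> g ` U"
        then obtain a where "a \<in> U" "y = g a" by auto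
        then show False using y dg UX by (auto simp: t_def)
      qed
      then show "y \<in> topspace Y - g ` U" using y by auto
    next
      fix y assume y: "y \<in> topspace Y - g ` U"
      then have "b y = Eu" by (simp add: b_def)
      then have "M_map (d y) = Eu" using Md y by auto
      then show "y \<in> {y\<in>topspace Y. d y \<noteq> Dc}" using y by (auto simp: M_Eu)
    qed
    then have "openin Y (topspace Y - g ` U)" using cd by (simp add: cont_D)
    moreover have "g ` U \<subseteq> topspace Y" using UX cg continuous_map_image_subset_topspace by blast
    ultimately show "closedin Y (g ` U)" by (simp add: closedin_def)
  qed
  show ?thesis using ij cm by blast
qed

lemma part4:
  assumes cg: "continuous_map X Y g" and cm: "closed_map X Y g" and ij: "inj_on g (topspace X)"
    and cf: "continuous_map A B f" and Lk: "lifts A B f pt_top S_top k_map"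
  shows "lifts A B f X Y g"
  unfolding lifts_def
proof (intro allI impI, elim conjE)
  fix t b assume ct: "continuous_map A X t" and cb: "continuous_map B Y b"
    and eq: "\<forall>a\<in>topspace A. g (t a) = b (f a)"
  have fA: "f ` topspace A \<subseteq> topspace B" using cf continuous_map_image_subset_topspace by blast
  have dense: "\<forall>F. closedin B F \<and> f ` topspace A \<subseteq> F \<longrightarrow> F = topspace B"
    using lifts_k[OF fA] Lk by blast
  have "closedin Y (g ` topspace X)" using cm by (simp add: closed_map_def)
  then have clF: "closedin B {y\<in>topspace B. b y \<in> g ` topspace X}"
    using cb unfolding continuous_map_closedin by blast
  have "f ` topspace A \<subseteq> {y\<in>topspace B. b y \<in> g ` topspace X}"
  proof
    fix y assume "y \<in> f ` topspace A"
    then obtain a where a: "a \<in> topspace A" "y = f a" by blast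
    have "t a \<in> topspace X" using ct a(1) continuous_map_image_subset_topspace by blast
    moreover have "b y = g (t a)" using eq a by simp
    ultimately show "y \<in> {y\<in>topspace B. b y \<in> g ` topspace X}" using fA a by blast
  qed
  then have F: "{y\<in>topspace B. b y \<in> g ` topspace X} = topspace B" using dense clF by blast
  then have bim: "b y \<in> g ` topspace X" if "y \<in> topspace B" for y using that by blast
  define d where "d y = inv_into (topspace X) g (b y)" for y
  have dX: "d y \<in> topspace X" if "y \<in> topspace B" for y
    using bim[OF that] by (simp add: d_def inv_into_into)
  have gd: "g (d y) = b y" if "y \<in> topspace B" for y
    using bim[OF that] by (simp add: d_def f_inv_into_f)
  have df: "d (f a) = t a" if "a \<in> topspace A" for a
  proof -
    have "t a \<in> topspace X" using ct that continuous_map_image_subset_topspace by blast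
    moreover have "b (f a) = g (t a)" using eq that by simp
    ultimately show ?thesis using ij by (simp add: d_def inv_into_f_f)
  qed
  have cd: "continuous_map B X d"
    unfolding continuous_map_closedin
  proof (intro conjI allI impI)
    show "d \<in> topspace B \<rightarrow> topspace X" using dX by blast
  next
    fix C assume C: "closedin X C"
    then have CX: "C \<subseteq> topspace X" by (simp add: closedin_subset)
    have "{y \<in> topspace B. d y \<in> C} = {y \<in> topspace B. b y \<in> g ` C}"
    proof (intro set_eqI iffI)
      fix y assume "y \<in> {y \<in> topspace B. d y \<in> C}"
      then have "y \<in> topspace B" "d y \<in> C" by auto
      moreover then have "b y = g (d y)" using gd by simp
      ultimately show "y \<in> {y \<in> topspace B. b y \<in> g ` C}" by blast
    next
      fix y assume y: "y \<in> {y \<in> topspace B. b y \<in> g ` C}"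
      then obtain c where c: "c \<in> C" "b y = g c" by auto
      then have "d y = c" using CX ij by (auto simp: d_def inv_into_f_f)
      then show "y \<in> {y \<in> topspace B. d y \<in> C}" using y c by auto
    qed
    moreover have "closedin Y (g ` C)" using cm C by (simp add: closed_map_def)
    ultimately show "closedin B {y \<in> topspace B. d y \<in> C}"
      using cb unfolding continuous_map_closedin by simp
  qed
  show "\<exists>d. continuous_map B X d \<and> (\<forall>a\<in>topspace A. d (f a) = t a) \<and>
             (\<forall>y\<in>topspace B. g (d y) = b y)"
    using cd df gd by blast
qed

lemma part5:
  fixes X :: "'a topology" and Y :: "'b topology" and g :: "'a \<Rightarrow> 'b"
  assumes cg: "continuous_map X Y g"
    and H: "\<forall>(A :: 'a topology) (B :: 'b topology) f.
          continuous_map A B f \<and> lifts A B f pt_top S_top k_map \<longrightarrow> lifts A B f X Y g"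
  shows "closed_embedding_map X Y g"
proof -
  define C where "C = Y closure_of (g ` topspace X)"
  have gY: "g ` topspace X \<subseteq> topspace Y" using cg continuous_map_image_subset_topspace by blast
  have gC: "g ` topspace X \<subseteq> C" unfolding C_def using gY closure_of_subset by blast
  have CY: "C \<subseteq> topspace Y" unfolding C_def by (simp add: closure_of_subset_topspace)
  have tC: "topspace (subtopology Y C) = C" using CY by auto
  have cf: "continuous_map X (subtopology Y C) g"
    using cg gC by (simp add: continuous_map_in_subtopology image_subset_iff_funcset)
  have dense: "\<forall>F. closedin (subtopology Y C) F \<and> g ` topspace X \<subseteq> F \<longrightarrow> F = topspace (subtopology Y C)"
  proof (intro allI impI, elim conjE)
    fix F assume F: "closedin (subtopology Y C) F" "g ` topspace X \<subseteq> F"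
    then obtain F' where F': "closedin Y F'" "F = F' \<inter> C" by (auto simp: closedin_subtopology)
    then have "g ` topspace X \<subseteq> F'" using F by blast
    then have "C \<subseteq> F'" unfolding C_def using F' closure_of_minimal by blast
    then show "F = topspace (subtopology Y C)" using F' tC by blast
  qed
  have gsub: "g ` topspace X \<subseteq> topspace (subtopology Y C)" using gC tC by simp
  have Lk: "lifts X (subtopology Y C) g pt_top S_top k_map"
    by (subst lifts_k[OF gsub]) (rule dense)
  have L: "lifts X (subtopology Y C) g X Y g" using H[rule_format, OF conjI[OF cf Lk]] .
  have cid: "continuous_map (subtopology Y C) Y id"
    by (simp add: continuous_map_from_subtopology)
  obtain d where cd: "continuous_map (subtopology Y C) X d"
    and dg: "\<forall>a\<in>topspace X. d (g a) = id a" and gd: "\<forall>y\<in>topspace (subtopology Y C). g (d y) = id y"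
  proof -
    have "continuous_map X X id \<and> continuous_map (subtopology Y C) Y id \<and>
            (\<forall>a\<in>topspace X. g (id a) = id (g a))" (is ?P) using cid by simp
    then have P: ?P .
    have "\<exists>d. continuous_map (subtopology Y C) X d \<and> (\<forall>a\<in>topspace X. d (g a) = id a) \<and>
             (\<forall>y\<in>topspace (subtopology Y C). g (d y) = id y)"
      using L[unfolded lifts_def, rule_format, OF P] .
    then show ?thesis using that by blast
  qed
  have dX: "d y \<in> topspace X" if "y \<in> C" for y
    using cd that tC continuous_map_image_subset_topspace by blast
  have CgX: "C = g ` topspace X"
  proof
    show "C \<subseteq> g ` topspace X"
    proof
      fix y assume "y \<in> C"
      then have "y = g (d y)" "d y \<in> topspace X" using gd tC dX by auto
      then show "y \<in> g ` topspace X" by blast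
    qed
  qed (rule gC)
  have hm: "homeomorphic_maps X (subtopology Y C) g d"
    unfolding homeomorphic_maps_def using cf cd dg gd by simp
  then have "embedding_map X Y g"
    unfolding embedding_map_def homeomorphic_map_maps using CgX by (intro exI[of _ d]) simp
  moreover have "closedin Y (g ` topspace X)" using CgX closedin_closure_of[of Y "g ` topspace X"] unfolding C_def by simp
  ultimately show ?thesis by (simp add: closed_embedding_map_def)
qed

theorem mainTheorem6:
  fixes X :: "'a topology" and Y :: "'b topology" and g :: "'a \<Rightarrow> 'b"
  shows
    "continuous_map D_top E_top M_map \<and> continuous_map pt_top S_top k_map \<and>
     (continuous_map X Y g \<longrightarrow>
        (lifts X Y g D_top E_top M_map \<longleftrightarrow> closed_embedding_map X Y g)) \<and>
     (continuous_map X Y g \<and> closed_embedding_map X Y g \<longrightarrow>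
        (\<forall>(A :: 'c topology) (B :: 'e topology) f.
            continuous_map A B f \<and> lifts A B f pt_top S_top k_map \<longrightarrow> lifts A B f X Y g)) \<and>
     (continuous_map X Y g \<and>
      (\<forall>(A :: 'a topology) (B :: 'b topology) f.
          continuous_map A B f \<and> lifts A B f pt_top S_top k_map \<longrightarrow> lifts A B f X Y g)
        \<longrightarrow> closed_embedding_map X Y g) \<and>
     (closed_embedding_map X Y g \<longleftrightarrow>
        continuous_map X Y g \<and> closed_map X Y g \<and> inj_on g (topspace X))"
proof (intro conjI impI)
  show "continuous_map D_top E_top M_map" by (rule cont_E)
  show "continuous_map pt_top S_top k_map" by (simp add: cont_S k_map_def)
next
  assume cg: "continuous_map X Y g"
  show "lifts X Y g D_top E_top M_map \<longleftrightarrow> closed_embedding_map X Y g"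
  proof
    assume "lifts X Y g D_top E_top M_map"
    then show "closed_embedding_map X Y g" using part3b[OF cg] cg by (simp add: ce_iff)
  next
    assume "closed_embedding_map X Y g"
    then show "lifts X Y g D_top E_top M_map" using part3a[OF cg] by (simp add: ce_iff)
  qed
next
  assume H: "continuous_map X Y g \<and> closed_embedding_map X Y g"
  then show "\<forall>(A :: 'c topology) (B :: 'e topology) f.
            continuous_map A B f \<and> lifts A B f pt_top S_top k_map \<longrightarrow> lifts A B f X Y g"
  proof (intro allI impI, elim conjE)
    fix A :: "'c topology" and B :: "'e topology" and f
    assume "continuous_map A B f" "lifts A B f pt_top S_top k_map"
    then show "lifts A B f X Y g" using part4[of X Y g A B f] H by (simp add: ce_iff)
  qed
next
  assume "continuous_map X Y g \<and>
      (\<forall>(A :: 'a topology) (B :: 'b topology) f.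
          continuous_map A B f \<and> lifts A B f pt_top S_top k_map \<longrightarrow> lifts A B f X Y g)"
  then show "closed_embedding_map X Y g" using part5[of X Y g] by (elim conjE)
next
  show "closed_embedding_map X Y g \<longleftrightarrow>
        continuous_map X Y g \<and> closed_map X Y g \<and> inj_on g (topspace X)" by (rule ce_iff)
qed

end
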